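(* Let $1\le N_a<N_b$, $\mathcal N=N_a+N_b$, real $\kappa_1<\dots<\kappa_{\mathcal N}$ with indices taken modulo $\mathcal N$. For $q=(q_1,q_2)\in\mathbb R^2$ define $q_{mn}=q_2-(\kappa_m+\kappa_n)q_1+\kappa_m\kappa_n$, $\widetilde q_{mn}=(\kappa_m-\kappa_n)q_{mn}$, $\rho_k(q)=\theta(\widetilde q_{k,k-N_a})\theta(\widetilde q_{k+N_a,k})$ ($\theta$ the Heaviside step function) and $P_m(q)=\prod_{k=m+N_a}^{m+N_b}\rho_k(q)$. Let $$\epsilon_m(q)=\prod_{k=m}^{m+N_b}\theta(\widetilde q_{k+N_a,k}).$$ Then $$\epsilon_m(q)=P_m(q)\quad\text{if } N_b\ge 2N_a-1,\qquad \epsilon_m(q)=P_m(q)\prod_{k=m+N_b-N_a+1}^{m+N_a-1}\theta(\widetilde q_{k+N_a,k})\quad\text{if } N_b<2N_a-1 .$$ Consequently the polygon with characteristic function $\epsilon_m$ is contained in the polygon with characteristic function $P_m$ and in the parabolic region $q_2\ge q_1^2$. Moreover, the polygon defined by $\epsilon_m$ is not void.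
   Context: Indices of $\kappa$ are read modulo $\mathcal N$, i.e. $\kappa_{l+\mathcal N}=\kappa_l$. The region defined by $P_m$ is a polygon inside the parabolic region $q_2\ge q_1^2$ with a vertex at $(\kappa_m,\kappa_m^2)$. *)

theory Defs
  imports "HOL-Analysis.Analysis"
begin

definition heaviside :: "real \<Rightarrow> real" where
  "heaviside x = (if 0 \<le> x then 1 else 0)"

definition qmn :: "(int \<Rightarrow> real) \<Rightarrow> int \<Rightarrow> int \<Rightarrow> real \<times> real \<Rightarrow> real" where
  "qmn \<kappa> m n q = snd q - (\<kappa> m + \<kappa> n) * fst q + \<kappa> m * \<kappa> n"

definition qt :: "(int \<Rightarrow> real) \<Rightarrow> int \<Rightarrow> int \<Rightarrow> real \<times> real \<Rightarrow> real" where
  "qt \<kappa> m n q = (\<kappa> m - \<kappa> n) * qmn \<kappa> m n q"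

definition rho :: "(int \<Rightarrow> real) \<Rightarrow> int \<Rightarrow> int \<Rightarrow> real \<times> real \<Rightarrow> real" where
  "rho \<kappa> Na k q = heaviside (qt \<kappa> k (k - Na) q) * heaviside (qt \<kappa> (k + Na) k q)"

definition Pm :: "(int \<Rightarrow> real) \<Rightarrow> int \<Rightarrow> int \<Rightarrow> int \<Rightarrow> real \<times> real \<Rightarrow> real" where
  "Pm \<kappa> Na Nb m q = (\<Prod>k\<in>{m + Na..m + Nb}. rho \<kappa> Na k q)"

definition epsm :: "(int \<Rightarrow> real) \<Rightarrow> int \<Rightarrow> int \<Rightarrow> int \<Rightarrow> real \<times> real \<Rightarrow> real" where
  "epsm \<kappa> Na Nb m q = (\<Prod>k\<in>{m..m + Nb}. heaviside (qt \<kappa> (k + Na) k q))"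

end

theory Submission
  imports Defs
begin

lemma hv_cases: "heaviside x = 0 \<or> heaviside x = 1"
  by (simp add: heaviside_def)

lemma hv_one: "heaviside x = 1 \<longleftrightarrow> 0 \<le> x"
  by (simp add: heaviside_def)

lemma prod01:
  assumes "finite A" and "\<And>x. h x = 0 \<or> h x = (1::real)"
  shows "prod h A = (if \<forall>x\<in>A. h x = 1 then 1 else 0)"
  using assms(1)
proof (induction A rule: finite_induct)
  case empty then show ?case by simp
next
  case (insert a A)
  then show ?case using assms(2)[of a] by auto
qed

lemma real_LA:
  fixes x y u v :: real
  assumes "x < y" "0 \<le> (y - x) * (v - (y + x)*u + y*x)" "x \<le> u" "u \<le> y"
  shows "u\<^sup>2 \<le> v"
proof -
  have q: "0 \<le> v - (y + x)*u + y*x" using assms(1,2) by (simp add: zero_le_mult_iff)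
  have "(u-x)*(u-y) \<le> 0" using assms(3,4) by (simp add: mult_nonneg_nonpos)
  moreover have "(u-x)*(u-y) = u*u - (y+x)*u + y*x" by algebra
  ultimately show ?thesis using q by (simp add: power2_eq_square)
qed

lemma real_LB:
  fixes a b s c u v :: real
  assumes "a < b" "0 \<le> (b - a) * (v - (b + a)*u + b*a)"
    "s < c" "0 \<le> (s - c) * (v - (s + c)*u + s*c)"
    "(a-u)*(b-u) < (s-u)*(c-u)"
  shows False
proof -
  have q1: "0 \<le> v - (b + a)*u + b*a" using assms(1,2) by (simp add: zero_le_mult_iff)
  have q2: "v - (s + c)*u + s*c \<le> 0" using assms(3,4) by (simp add: zero_le_mult_iff)
  have "(a-u)*(b-u) = u*u - (b+a)*u + b*a" "(s-u)*(c-u) = u*u - (s+c)*u + s*c" by algebra+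
  then show False using q1 q2 assms(5) by linarith
qed

lemma cover:
  fixes \<kappa> :: "int \<Rightarrow> real"
  assumes mono: "\<And>x y. 1 \<le> x \<Longrightarrow> x < y \<Longrightarrow> y \<le> N \<Longrightarrow> \<kappa> x < \<kappa> y"
    and "1 \<le> Na" "1 \<le> lo" "lo + Na \<le> hi" "hi \<le> N" "\<kappa> lo \<le> u" "u \<le> \<kappa> hi"
  shows "\<exists>p. lo \<le> p \<and> p \<le> hi - Na \<and> \<kappa> p \<le> u \<and> u \<le> \<kappa> (p + Na)"
proof -
  define A where "A = {p\<in>{lo..hi}. \<kappa> p \<le> u}"
  have fA: "finite A" unfolding A_def by (rule finite_subset[of _ "{lo..hi}"]) auto
  have lA: "lo \<in> A" unfolding A_def using assms by auto
  define p0 where "p0 = Max A"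
  have p0A: "p0 \<in> A" unfolding p0_def using fA lA Max_in by blast
  have p0max: "\<And>p. p \<in> A \<Longrightarrow> p \<le> p0" unfolding p0_def using fA by simp
  show ?thesis
  proof (cases "p0 \<le> hi - Na")
    case True
    have "p0 + 1 \<notin> A" using p0max by fastforce
    moreover have "p0 + 1 \<in> {lo..hi}" using True p0A assms unfolding A_def by auto
    ultimately have u1: "u < \<kappa> (p0 + 1)" unfolding A_def by auto
    have "\<kappa> (p0 + 1) \<le> \<kappa> (p0 + Na)"
    proof (cases "Na = 1")
      case True then show ?thesis by simp
    next
      case False
      have "lo \<le> p0" using p0A unfolding A_def by auto
      then have "1 \<le> p0 + 1" "p0 + 1 < p0 + Na" "p0 + Na \<le> N" using False True assms(2-5) by auto
      then show ?thesis using mono[of "p0+1" "p0+Na"] by simp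
    qed
    then show ?thesis using True p0A u1 unfolding A_def by (intro exI[of _ p0]) auto
  next
    case False
    have "\<kappa> (hi - Na) \<le> \<kappa> p0"
    proof (cases "hi - Na = p0")
      case True then show ?thesis by simp
    next
      case F: False
      have "p0 \<le> hi" using p0A unfolding A_def by auto
      then have "1 \<le> hi - Na" "hi - Na < p0" "p0 \<le> N" using False assms(3-5) by auto
      then show ?thesis using mono[of "hi - Na" p0] by simp
    qed
    then show ?thesis using False p0A assms unfolding A_def by (intro exI[of _ "hi - Na"]) auto
  qed
qed


lemma part4_r:
  fixes \<kappa> :: "int \<Rightarrow> real" and Na Nb r :: int and u v :: real
  assumes Na1: "1 \<le> Na" and NaNb: "Na < Nb" and mono: "strict_mono_on {1..Na+Nb} \<kappa>"
    and per: "\<And>l. \<kappa> (l + (Na+Nb)) = \<kappa> l"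
    and r1: "1 \<le> r" and r2: "r \<le> Na + Nb"
    and H: "\<And>k. r \<le> k \<Longrightarrow> k \<le> r + Nb \<Longrightarrow>
        0 \<le> (\<kappa>(k+Na) - \<kappa> k) * (v - (\<kappa>(k+Na) + \<kappa> k)*u + \<kappa>(k+Na)*\<kappa> k)"
  shows "u\<^sup>2 \<le> v"
proof -
  define N where "N = Na + Nb"
  have kl: "\<And>x y. 1 \<le> x \<Longrightarrow> x < y \<Longrightarrow> y \<le> N \<Longrightarrow> \<kappa> x < \<kappa> y"
    using mono unfolding N_def by (auto intro: strict_mono_onD)
  have kle: "\<And>x y. 1 \<le> x \<Longrightarrow> x \<le> y \<Longrightarrow> y \<le> N \<Longrightarrow> \<kappa> x \<le> \<kappa> y"
    using kl by (metis order_le_less)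
  have perN: "\<And>l. \<kappa> (l + N) = \<kappa> l" using per unfolding N_def by simp
  have NW: "0 \<le> (\<kappa>(p+Na) - \<kappa> p) * (v - (\<kappa>(p+Na) + \<kappa> p)*u + \<kappa>(p+Na)*\<kappa> p)"
    if "1 \<le> p" "p \<le> Nb" "r \<le> p \<or> p + N \<le> r + Nb" for p
  proof (cases "r \<le> p")
    case True then show ?thesis using H[of p] that NaNb r1 by simp
  next
    case False
    then have "p + N \<le> r + Nb" using that by simp
    then have h: "0 \<le> (\<kappa>(p+N+Na) - \<kappa> (p+N)) * (v - (\<kappa>(p+N+Na) + \<kappa> (p+N))*u + \<kappa>(p+N+Na)*\<kappa> (p+N))"
      using H[of "p+N"] r2 that(1) \<open>p + N \<le> r + Nb\<close> unfolding N_def by linarith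
    have e: "\<kappa> (p+N+Na) = \<kappa> (p+Na)" using perN[of "p+Na"] by (simp add: add_ac)
    show ?thesis using h unfolding e perN .
  qed
  have NWA: "u\<^sup>2 \<le> v" if "1 \<le> p" "p \<le> Nb" "r \<le> p \<or> p + N \<le> r + Nb"
     "\<kappa> p \<le> u" "u \<le> \<kappa> (p+Na)" for p
    using real_LA[OF kl NW[OF that(1-3)] that(4,5)] that Na1 unfolding N_def by auto
  have NWval: "\<kappa> p < \<kappa> (p + Na)" if "1 \<le> p" "p \<le> Nb" for p
    using kl that Na1 unfolding N_def by auto
  consider (I) "Nb < r" | (II) "Na < r" "r \<le> Nb" | (III) "r \<le> Na" by linarith
  then show ?thesis
  proof cases
    case I
    have wr: "0 \<le> (\<kappa>(r-Nb) - \<kappa> r) * (v - (\<kappa>(r-Nb) + \<kappa> r)*u + \<kappa>(r-Nb)*\<kappa> r)"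
    proof -
      have "\<kappa> (r + Na) = \<kappa> (r - Nb)" using perN[of "r - Nb"] unfolding N_def by (simp add: algebra_simps)
      then show ?thesis using H[of r] NaNb Na1 by simp
    qed
    have sc: "\<kappa> (r - Nb) < \<kappa> r" using kl[of "r-Nb" r] I r2 NaNb Na1 unfolding N_def by auto
    consider "u < \<kappa> 1" | "\<kappa> 1 \<le> u" "u \<le> \<kappa> r" | "\<kappa> r < u" by linarith
    then show ?thesis
    proof cases
      case 1
      have a: "\<kappa> 1 \<le> \<kappa> (r - Nb)" using kle[of 1 "r - Nb"] I r2 NaNb unfolding N_def by auto
      have b: "\<kappa> (1 + Na) < \<kappa> r" using kl[of "1+Na" r] I r2 NaNb Na1 unfolding N_def by auto
      have "(\<kappa> 1 - u) * (\<kappa> (1+Na) - u) < (\<kappa> (r-Nb) - u) * (\<kappa> r - u)"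
        using 1 a b NWval[of 1] Na1 NaNb by (intro mult_le_less_imp_less) auto
      then show ?thesis
        using real_LB[OF NWval[of 1] NW[of 1] sc wr] Na1 NaNb I r2 unfolding N_def by auto
    next
      case 2
      then obtain p where "1 \<le> p" "p \<le> r - Na" "\<kappa> p \<le> u" "u \<le> \<kappa> (p+Na)"
        using cover[where \<kappa>=\<kappa> and N=N and Na=Na and lo=1 and hi=r and u=u, OF kl Na1] I NaNb Na1 r2 unfolding N_def by auto
      then show ?thesis using NWA[of p] I NaNb r2 unfolding N_def by auto
    next
      case 3
      have a: "\<kappa> (r - Nb) < \<kappa> (r - Na)" using kl[of "r - Nb" "r - Na"] I r2 NaNb unfolding N_def by auto
      have nw: "0 \<le> (\<kappa>(r-Na+Na) - \<kappa> (r-Na)) * (v - (\<kappa>(r-Na+Na) + \<kappa> (r-Na))*u + \<kappa>(r-Na+Na)*\<kappa> (r-Na))"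
        using NW[of "r - Na"] I r2 NaNb Na1 unfolding N_def by auto
      have nwv: "\<kappa> (r - Na) < \<kappa> (r - Na + Na)" using NWval[of "r-Na"] I r2 NaNb Na1 unfolding N_def by auto
      have "(\<kappa> (r-Na) - u) * (\<kappa> (r-Na+Na) - u) < (\<kappa> (r-Nb) - u) * (\<kappa> r - u)"
      proof -
        have "(u - \<kappa> (r-Na)) * (u - \<kappa> r) < (u - \<kappa> (r-Nb)) * (u - \<kappa> r)"
          using 3 a by (intro mult_strict_right_mono) auto
        then show ?thesis by (simp add: algebra_simps)
      qed
      then show ?thesis using real_LB[OF nwv nw sc wr] by auto
    qed
  next
    case II
    have wr: "0 \<le> (\<kappa> Na - \<kappa> N) * (v - (\<kappa> Na + \<kappa> N)*u + \<kappa> Na*\<kappa> N)"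
    proof -
      have "\<kappa> (N + Na) = \<kappa> Na" using perN[of Na] by (simp add: add_ac)
      then show ?thesis using H[of N] II r2 unfolding N_def by simp
    qed
    have sc: "\<kappa> Na < \<kappa> N" using kl[of Na N] Na1 NaNb unfolding N_def by auto
    consider "u < \<kappa> 1" | "\<kappa> 1 \<le> u" "u \<le> \<kappa> r" | "\<kappa> r \<le> u" "u \<le> \<kappa> N" | "\<kappa> N < u" by linarith
    then show ?thesis
    proof cases
      case 1
      have a: "\<kappa> 1 \<le> \<kappa> Na" using kle[of 1 Na] Na1 NaNb unfolding N_def by auto
      have b: "\<kappa> (1 + Na) < \<kappa> N" using kl[of "1+Na" N] NaNb Na1 unfolding N_def by auto
      have "(\<kappa> 1 - u) * (\<kappa> (1+Na) - u) < (\<kappa> Na - u) * (\<kappa> N - u)"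
        using 1 a b NWval[of 1] Na1 NaNb by (intro mult_le_less_imp_less) auto
      then show ?thesis
        using real_LB[OF NWval[of 1] NW[of 1] sc wr] Na1 NaNb II r2 unfolding N_def by auto
    next
      case 2
      then obtain p where "1 \<le> p" "p \<le> r - Na" "\<kappa> p \<le> u" "u \<le> \<kappa> (p+Na)"
        using cover[where \<kappa>=\<kappa> and N=N and Na=Na and lo=1 and hi=r and u=u, OF kl Na1] II NaNb Na1 r2 unfolding N_def by auto
      then show ?thesis using NWA[of p] II NaNb r2 unfolding N_def by auto
    next
      case 3
      then obtain p where "r \<le> p" "p \<le> N - Na" "\<kappa> p \<le> u" "u \<le> \<kappa> (p+Na)"
        using cover[where \<kappa>=\<kappa> and N=N and Na=Na and lo=r and hi=N and u=u, OF kl Na1] II NaNb Na1 r1 unfolding N_def by auto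
      then show ?thesis using NWA[of p] II NaNb r1 unfolding N_def by auto
    next
      case 4
      have a: "\<kappa> Na < \<kappa> Nb" using kl[of Na Nb] Na1 NaNb unfolding N_def by auto
      have e: "Nb + Na = N" unfolding N_def by simp
      have nw: "0 \<le> (\<kappa> N - \<kappa> Nb) * (v - (\<kappa> N + \<kappa> Nb)*u + \<kappa> N*\<kappa> Nb)"
        using NW[of Nb] II Na1 NaNb unfolding e by auto
      have nwv: "\<kappa> Nb < \<kappa> N" using NWval[of Nb] Na1 NaNb unfolding e by auto
      have "(\<kappa> Nb - u) * (\<kappa> N - u) < (\<kappa> Na - u) * (\<kappa> N - u)"
      proof -
        have "(u - \<kappa> Nb) * (u - \<kappa> N) < (u - \<kappa> Na) * (u - \<kappa> N)"
          using 4 a by (intro mult_strict_right_mono) auto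
        then show ?thesis by (simp add: algebra_simps)
      qed
      then show ?thesis using real_LB[OF nwv nw sc wr] by auto
    qed
  next
    case III
    have wr: "0 \<le> (\<kappa> r - \<kappa> (r+Nb)) * (v - (\<kappa> r + \<kappa> (r+Nb))*u + \<kappa> r*\<kappa> (r+Nb))"
    proof -
      have "\<kappa> (r + Nb + Na) = \<kappa> r" using perN[of r] unfolding N_def by (simp add: add_ac)
      then show ?thesis using H[of "r+Nb"] NaNb Na1 by simp
    qed
    have sc: "\<kappa> r < \<kappa> (r+Nb)" using kl[of r "r+Nb"] r1 III NaNb Na1 unfolding N_def by auto
    consider "u < \<kappa> r" | "\<kappa> r \<le> u" "u \<le> \<kappa> N" | "\<kappa> N < u" by linarith
    then show ?thesis
    proof cases
      case 1
      have b: "\<kappa> (r + Na) < \<kappa> (r+Nb)" using kl[of "r+Na" "r+Nb"] r1 III NaNb Na1 unfolding N_def by auto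
      have nwv: "\<kappa> r < \<kappa> (r + Na)" using NWval[of r] r1 III NaNb by auto
      have "(\<kappa> r - u) * (\<kappa> (r+Na) - u) < (\<kappa> r - u) * (\<kappa> (r+Nb) - u)"
        using 1 b by (intro mult_strict_left_mono) auto
      then show ?thesis
        using real_LB[OF nwv NW[of r] sc wr] r1 III NaNb by auto
    next
      case 2
      then obtain p where "r \<le> p" "p \<le> N - Na" "\<kappa> p \<le> u" "u \<le> \<kappa> (p+Na)"
        using cover[where \<kappa>=\<kappa> and N=N and Na=Na and lo=r and hi=N and u=u, OF kl Na1] III NaNb Na1 r1 unfolding N_def by auto
      then show ?thesis using NWA[of p] III NaNb r1 unfolding N_def by auto
    next
      case 3
      have a: "\<kappa> r < \<kappa> Nb" using kl[of r Nb] r1 III NaNb unfolding N_def by auto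
      have c: "\<kappa> (r + Nb) \<le> \<kappa> N" using kle[of "r+Nb" N] r1 III NaNb unfolding N_def by auto
      have e: "Nb + Na = N" unfolding N_def by simp
      have nw: "0 \<le> (\<kappa> N - \<kappa> Nb) * (v - (\<kappa> N + \<kappa> Nb)*u + \<kappa> N*\<kappa> Nb)"
        using NW[of Nb] III r1 Na1 NaNb unfolding e by auto
      have nwv: "\<kappa> Nb < \<kappa> N" using NWval[of Nb] Na1 NaNb unfolding e by auto
      have "(\<kappa> Nb - u) * (\<kappa> N - u) < (\<kappa> r - u) * (\<kappa> (r+Nb) - u)"
      proof -
        have "(u - \<kappa> Nb) * (u - \<kappa> N) < (u - \<kappa> r) * (u - \<kappa> (r+Nb))"
          using 3 a c sc nwv by (intro mult_less_le_imp_less) auto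
        then show ?thesis by (simp add: algebra_simps)
      qed
      then show ?thesis using real_LB[OF nwv nw sc wr] by auto
    qed
  qed
qed


lemma epsm_char: "epsm \<kappa> Na Nb m q = (if \<forall>k\<in>{m..m+Nb}. 0 \<le> qt \<kappa> (k+Na) k q then 1 else 0)"
  unfolding epsm_def by (subst prod01) (auto simp: hv_cases hv_one heaviside_def)

lemma Pm_char: "Pm \<kappa> Na Nb m q = (if \<forall>k\<in>{m+Na..m+Nb}. 0 \<le> qt \<kappa> k (k-Na) q \<and> 0 \<le> qt \<kappa> (k+Na) k q then 1 else 0)"
proof -
  have "\<And>k. rho \<kappa> Na k q = 0 \<or> rho \<kappa> Na k q = 1" unfolding rho_def
    using hv_cases by (metis mult_1 mult_zero_left)
  moreover have "\<And>k. rho \<kappa> Na k q = 1 \<longleftrightarrow> 0 \<le> qt \<kappa> k (k-Na) q \<and> 0 \<le> qt \<kappa> (k+Na) k q"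
    unfolding rho_def using hv_cases hv_one by (metis mult_1 mult_zero_left mult_zero_right zero_neq_one)
  ultimately show ?thesis unfolding Pm_def by (subst prod01) auto
qed

lemma extra_char: "(\<Prod>k\<in>A. heaviside (qt \<kappa> (k + Na) k q)) = (if \<forall>k\<in>A. 0 \<le> qt \<kappa> (k+Na) k q then 1 else 0)"
  if "finite A"
  using that by (subst prod01) (auto simp: hv_cases hv_one heaviside_def)

lemma qt_expand: "qt \<kappa> a b q = (\<kappa> a - \<kappa> b) * (snd q - (\<kappa> a + \<kappa> b) * fst q + \<kappa> a * \<kappa> b)"
  unfolding qt_def qmn_def by simp

lemma per_mult:
  fixes \<kappa> :: "int \<Rightarrow> real"
  assumes per: "\<And>l. \<kappa> (l + N) = \<kappa> l"
  shows "\<kappa> (x + N * d) = \<kappa> x"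
proof -
  have "\<forall>x. \<kappa> (x + N * d) = \<kappa> x"
  proof (induction d rule: int_induct[where k=0])
    case base then show ?case by simp
  next
    case (step1 i)
    show ?case
    proof
      fix x
      have "\<kappa> (x + N * (i+1)) = \<kappa> ((x + N*i) + N)" by (simp add: algebra_simps)
      also have "\<dots> = \<kappa> x" using per step1 by simp
      finally show "\<kappa> (x + N * (i+1)) = \<kappa> x" .
    qed
  next
    case (step2 i)
    show ?case
    proof
      fix x
      have "\<kappa> (x + N * (i - 1)) = \<kappa> ((x + N * (i - 1)) + N)" using per by simp
      also have "\<dots> = \<kappa> (x + N * i)" by (simp add: algebra_simps)
      also have "\<dots> = \<kappa> x" using step2 by simp
      finally show "\<kappa> (x + N * (i - 1)) = \<kappa> x" .
    qed
  qed
  then show ?thesis by simp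
qed

lemma cyclic:
  fixes \<kappa> :: "int \<Rightarrow> real"
  assumes kl: "\<And>x y. 1 \<le> x \<Longrightarrow> x < y \<Longrightarrow> y \<le> N \<Longrightarrow> \<kappa> x < \<kappa> y"
    and perN: "\<And>l. \<kappa> (l + N) = \<kappa> l"
    and "1 \<le> r" "r \<le> N" "r < x" "x < y" "y < r + N"
  shows "0 < (\<kappa> y - \<kappa> x) * ((\<kappa> r - \<kappa> x) * (\<kappa> r - \<kappa> y))"
proof -
  have sh: "\<kappa> z = \<kappa> (z - N)" for z using perN[of "z - N"] by simp
  consider "y \<le> N" | "x \<le> N" "N < y" | "N < x" using assms by linarith
  then show ?thesis
  proof cases
    case 1
    then have "\<kappa> r < \<kappa> x" "\<kappa> x < \<kappa> y" using kl assms by auto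
    then show ?thesis by (simp add: mult_pos_pos mult_neg_neg)
  next
    case 2
    then have "\<kappa> r < \<kappa> x \<or> r = x" "\<kappa> (y - N) < \<kappa> r" using kl assms by auto
    then have "\<kappa> r < \<kappa> x" "\<kappa> y < \<kappa> r" using assms sh[of y] by auto
    then show ?thesis by (simp add: mult_pos_pos mult_neg_neg mult_pos_neg mult_neg_pos)
  next
    case 3
    then have "\<kappa> (x - N) < \<kappa> (y - N)" "\<kappa> (y - N) < \<kappa> r" using kl assms by auto
    then have "\<kappa> x < \<kappa> y" "\<kappa> y < \<kappa> r" using sh[of x] sh[of y] by auto
    then show ?thesis by (simp add: mult_pos_pos mult_neg_neg mult_pos_neg mult_neg_pos)
  qed
qed


lemma open_qt: "open {q. 0 < qt \<kappa> a b q}"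
  unfolding qt_expand by (rule open_Collect_less) (intro continuous_intros)+

lemma sigma_tau:
  fixes K X Y :: real
  assumes "(K < X \<and> K < Y \<and> X < Y) \<or> (K < X \<and> Y < K) \<or> (X < K \<and> Y < K \<and> X < Y)"
  shows "\<exists>\<sigma> \<tau>. 0 < (X-K)*(\<sigma>*(\<tau>-X)) \<and> 0 < (K-Y)*(\<sigma>*(\<tau>-Y))"
  using assms
proof (elim disjE)
  assume h: "K < X \<and> K < Y \<and> X < Y"
  show ?thesis
    by (rule exI[of _ 1], rule exI[of _ "(X+Y)/2"]) (use h in \<open>auto intro!: mult_pos_pos mult_neg_neg\<close>)
next
  assume h: "K < X \<and> Y < K"
  show ?thesis
    by (rule exI[of _ 1], rule exI[of _ "max X Y + 1"]) (use h in \<open>auto intro!: mult_pos_pos mult_neg_neg\<close>)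
next
  assume h: "X < K \<and> Y < K \<and> X < Y"
  show ?thesis
    by (rule exI[of _ "-1"], rule exI[of _ "(X+Y)/2"]) (use h in \<open>auto intro!: mult_pos_pos mult_neg_neg\<close>)
qed

lemma part5_r:
  fixes \<kappa> :: "int \<Rightarrow> real" and Na Nb r :: int
  assumes Na1: "1 \<le> Na" and NaNb: "Na < Nb" and mono: "strict_mono_on {1..Na+Nb} \<kappa>"
    and per: "\<And>l. \<kappa> (l + (Na+Nb)) = \<kappa> l"
    and r1: "1 \<le> r" and r2: "r \<le> Na + Nb"
  shows "interior {q. epsm \<kappa> Na Nb r q = 1} \<noteq> {}"
proof -
  define N where "N = Na + Nb"
  have kl: "\<And>x y. 1 \<le> x \<Longrightarrow> x < y \<Longrightarrow> y \<le> N \<Longrightarrow> \<kappa> x < \<kappa> y"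
    using mono unfolding N_def by (auto intro: strict_mono_onD)
  have perN: "\<And>l. \<kappa> (l + N) = \<kappa> l" using per unfolding N_def by simp
  have sh: "\<kappa> z = \<kappa> (z - N)" for z using perN[of "z - N"] by simp
  define K where "K = \<kappa> r"
  define X where "X = \<kappa> (r + Na)"
  define Y where "Y = \<kappa> (r + Nb)"
  have XY: "(K < X \<and> K < Y \<and> X < Y) \<or> (K < X \<and> Y < K) \<or> (X < K \<and> Y < K \<and> X < Y)"
  proof -
    consider "r \<le> Na" | "Na < r" "r \<le> Nb" | "Nb < r" by linarith
    then show ?thesis
    proof cases
      case 1
      then have "K < X" "X < Y" unfolding K_def X_def Y_def
        using kl[of r "r+Na"] kl[of "r+Na" "r+Nb"] r1 Na1 NaNb unfolding N_def by auto
      then show ?thesis by auto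
    next
      case 2
      have "K < X" unfolding K_def X_def using kl[of r "r+Na"] r1 2 Na1 unfolding N_def by auto
      moreover have "Y = \<kappa> (r - Na)" unfolding Y_def using sh[of "r+Nb"] unfolding N_def by simp
      moreover have "\<kappa> (r - Na) < K" unfolding K_def using kl[of "r - Na" r] 2 r2 Na1 unfolding N_def by auto
      ultimately show ?thesis by auto
    next
      case 3
      have "X = \<kappa> (r - Nb)" unfolding X_def using sh[of "r+Na"] unfolding N_def by simp
      moreover have "Y = \<kappa> (r - Na)" unfolding Y_def using sh[of "r+Nb"] unfolding N_def by simp
      moreover have "\<kappa> (r - Na) < K" unfolding K_def using kl[of "r - Na" r] 3 r2 Na1 NaNb unfolding N_def by auto
      moreover have "\<kappa> (r - Nb) < \<kappa> (r - Na)" using kl[of "r - Nb" "r - Na"] 3 r2 Na1 NaNb unfolding N_def by auto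
      ultimately show ?thesis by auto
    qed
  qed
  obtain \<sigma> \<tau> where st: "0 < (X-K)*(\<sigma>*(\<tau>-X))" "0 < (K-Y)*(\<sigma>*(\<tau>-Y))"
    using sigma_tau[OF XY] by blast
  define Tm where "Tm = (\<Inter>k\<in>{r+1..r+Nb-1}. {q. 0 < qt \<kappa> (k+Na) k q})"
  have oTm: "open Tm" unfolding Tm_def by (intro open_INT) (auto simp: open_qt)
  define P where "P = (K, K*K)"
  have PTm: "P \<in> Tm" unfolding Tm_def
  proof (intro INT_I CollectI)
    fix k assume k: "k \<in> {r+1..r+Nb-1}"
    have c: "0 < (\<kappa> (k+Na) - \<kappa> k) * ((\<kappa> r - \<kappa> k) * (\<kappa> r - \<kappa> (k+Na)))"
      using cyclic[where \<kappa>=\<kappa> and N=N and r=r and x=k and y="k+Na", OF kl perN] k r1 r2 Na1 unfolding N_def by auto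
    have "K*K - (\<kappa> (k+Na) + \<kappa> k) * K + \<kappa> (k+Na) * \<kappa> k = (\<kappa> r - \<kappa> k) * (\<kappa> r - \<kappa> (k+Na))"
      unfolding K_def by algebra
    then show "0 < qt \<kappa> (k + Na) k P" unfolding qt_expand P_def using c by simp
  qed
  obtain e where e: "e > 0" "ball P e \<subseteq> Tm" using oTm PTm open_contains_ball by blast
  define d where "d = (\<sigma>, \<sigma>*(K+\<tau>))"
  define t where "t = e / (2*(norm d + 1))"
  have t0: "t > 0" unfolding t_def using e by (intro divide_pos_pos) (auto intro: add_nonneg_pos)
  define Q where "Q = P + t *\<^sub>R d"
  have "dist P Q = t * norm d" unfolding Q_def dist_norm using t0 by simp
  also have "\<dots> < t * (2*(norm d+1))"
  proof (rule mult_strict_left_mono)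
    have aux: "\<And>x::real. 0 \<le> x \<Longrightarrow> x < 2*(x+1)" by (simp add: algebra_simps)
    show "norm d < 2*(norm d+1)" by (rule aux) simp
  qed (rule t0)
  also have "\<dots> = e"
  proof -
    have nz: "norm d + 1 > 0" by (rule add_nonneg_pos) auto
    then show ?thesis unfolding t_def by simp
  qed
  finally have "Q \<in> Tm" using e by auto
  have fQ: "fst Q = K + t*\<sigma>" "snd Q = K*K + t*(\<sigma>*(K+\<tau>))" unfolding Q_def P_def d_def by simp_all
  have q1: "0 < qt \<kappa> (r+Na) r Q"
  proof -
    have "qt \<kappa> (r+Na) r Q = t * ((X-K)*(\<sigma>*(\<tau>-X)))"
      unfolding qt_expand fQ X_def[symmetric] K_def[symmetric] by algebra
    then show ?thesis using t0 st by simp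
  qed
  have q2: "0 < qt \<kappa> (r+Nb+Na) (r+Nb) Q"
  proof -
    have "\<kappa> (r+Nb+Na) = K" unfolding K_def using perN[of r] unfolding N_def by (simp add: add_ac)
    note e = this
    have "qt \<kappa> (r+Nb+Na) (r+Nb) Q = t * ((K-Y)*(\<sigma>*(\<tau>-Y)))"
      unfolding qt_expand fQ Y_def[symmetric] e by algebra
    then show ?thesis using t0 st by simp
  qed
  define T where "T = (\<Inter>k\<in>{r..r+Nb}. {q. 0 < qt \<kappa> (k+Na) k q})"
  have oT: "open T" unfolding T_def by (intro open_INT) (auto simp: open_qt)
  have QT: "Q \<in> T" unfolding T_def
  proof (intro INT_I CollectI)
    fix k assume k: "k \<in> {r..r+Nb}"
    then consider "k = r" | "k = r + Nb" | "k \<in> {r+1..r+Nb-1}" by fastforce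
    then show "0 < qt \<kappa> (k + Na) k Q"
      using q1 q2 \<open>Q \<in> Tm\<close> unfolding Tm_def by cases auto
  qed
  have "T \<subseteq> {q. epsm \<kappa> Na Nb r q = 1}"
    unfolding T_def by (auto simp: epsm_char less_imp_le)
  then have "Q \<in> interior {q. epsm \<kappa> Na Nb r q = 1}" using oT QT by (rule interiorI[rotated 2])
  then show ?thesis by auto
qed


theorem lemma5p2:
  fixes \<kappa> :: "int \<Rightarrow> real" and Na Nb m :: int
  assumes "1 \<le> Na" and "Na < Nb"
    and "strict_mono_on {1..Na + Nb} \<kappa>"
    and "\<And>l. \<kappa> (l + (Na + Nb)) = \<kappa> l"
  shows "(Nb \<ge> 2 * Na - 1 \<longrightarrow> (\<forall>q. epsm \<kappa> Na Nb m q = Pm \<kappa> Na Nb m q))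
       \<and> (Nb < 2 * Na - 1 \<longrightarrow> (\<forall>q. epsm \<kappa> Na Nb m q =
             Pm \<kappa> Na Nb m q * (\<Prod>k\<in>{m + Nb - Na + 1..m + Na - 1}. heaviside (qt \<kappa> (k + Na) k q))))
       \<and> {q. epsm \<kappa> Na Nb m q = 1} \<subseteq> {q. Pm \<kappa> Na Nb m q = 1}
       \<and> {q. epsm \<kappa> Na Nb m q = 1} \<subseteq> {q. (fst q)\<^sup>2 \<le> snd q}
       \<and> interior {q. epsm \<kappa> Na Nb m q = 1} \<noteq> {}"
proof -
  note Na1 = assms(1) and NaNb = assms(2) and mono = assms(3) and per = assms(4)
  define N where "N = Na + Nb"
  have perN: "\<And>l. \<kappa> (l + N) = \<kappa> l" using per unfolding N_def by simp
  have Npos: "N > 0" unfolding N_def using Na1 NaNb by simp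
  define r where "r = (m - 1) mod N + 1"
  define d where "d = (m - 1) div N"
  have r1: "1 \<le> r" and r2: "r \<le> Na + Nb" unfolding r_def using Npos N_def
    by (simp_all add: pos_mod_sign) (smt (verit) pos_mod_bound)
  have mr: "m = r + N * d" unfolding r_def d_def by (simp add: algebra_simps)
  have qsh: "qt \<kappa> (k + N*d + Na) (k + N*d) q = qt \<kappa> (k+Na) k q" for k q
  proof -
    have "\<kappa> (k + N*d + Na) = \<kappa> (k + Na)" using per_mult[where \<kappa>=\<kappa> and N=N and x="k+Na" and d=d, OF perN] by (simp add: add_ac)
    moreover have "\<kappa> (k + N*d) = \<kappa> k" using per_mult[where \<kappa>=\<kappa> and N=N and x=k and d=d, OF perN] .
    ultimately show ?thesis unfolding qt_expand by simp
  qed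
  have cond: "(\<forall>k\<in>{m..m+Nb}. 0 \<le> qt \<kappa> (k+Na) k q) \<longleftrightarrow> (\<forall>k\<in>{r..r+Nb}. 0 \<le> qt \<kappa> (k+Na) k q)" for q
  proof
    assume h: "\<forall>k\<in>{m..m+Nb}. 0 \<le> qt \<kappa> (k+Na) k q"
    show "\<forall>k\<in>{r..r+Nb}. 0 \<le> qt \<kappa> (k+Na) k q"
    proof
      fix k assume "k \<in> {r..r+Nb}"
      then have "k + N*d \<in> {m..m+Nb}" using mr by auto
      then show "0 \<le> qt \<kappa> (k+Na) k q" using h qsh[of k q] by (metis add.commute add.left_commute)
    qed
  next
    assume h: "\<forall>k\<in>{r..r+Nb}. 0 \<le> qt \<kappa> (k+Na) k q"
    show "\<forall>k\<in>{m..m+Nb}. 0 \<le> qt \<kappa> (k+Na) k q"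
    proof
      fix k assume "k \<in> {m..m+Nb}"
      then have k': "k - N*d \<in> {r..r+Nb}" using mr by auto
      have "qt \<kappa> (k - N*d + N*d + Na) (k - N*d + N*d) q = qt \<kappa> (k - N*d + Na) (k - N*d) q" by (rule qsh)
      then show "0 \<le> qt \<kappa> (k+Na) k q" using h k' by simp
    qed
  qed
  have epseq: "epsm \<kappa> Na Nb m q = epsm \<kappa> Na Nb r q" for q
    unfolding epsm_char using cond[of q] by simp
  have P1: "Nb \<ge> 2 * Na - 1 \<longrightarrow> (\<forall>q. epsm \<kappa> Na Nb m q = Pm \<kappa> Na Nb m q)"
  proof (intro impI allI)
    fix q assume h: "Nb \<ge> 2 * Na - 1"
    have "(\<forall>k\<in>{m..m+Nb}. 0 \<le> qt \<kappa> (k+Na) k q) \<longleftrightarrow>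
          (\<forall>k\<in>{m+Na..m+Nb}. 0 \<le> qt \<kappa> k (k-Na) q \<and> 0 \<le> qt \<kappa> (k+Na) k q)"
    proof
      assume a: "\<forall>k\<in>{m..m+Nb}. 0 \<le> qt \<kappa> (k+Na) k q"
      show "\<forall>k\<in>{m+Na..m+Nb}. 0 \<le> qt \<kappa> k (k-Na) q \<and> 0 \<le> qt \<kappa> (k+Na) k q"
      proof
        fix k assume k: "k \<in> {m+Na..m+Nb}"
        have "k - Na \<in> {m..m+Nb}" "k \<in> {m..m+Nb}" using k Na1 by auto
        then show "0 \<le> qt \<kappa> k (k-Na) q \<and> 0 \<le> qt \<kappa> (k+Na) k q" using a by fastforce
      qed
    next
      assume a: "\<forall>k\<in>{m+Na..m+Nb}. 0 \<le> qt \<kappa> k (k-Na) q \<and> 0 \<le> qt \<kappa> (k+Na) k q"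
      show "\<forall>k\<in>{m..m+Nb}. 0 \<le> qt \<kappa> (k+Na) k q"
      proof
        fix k assume k: "k \<in> {m..m+Nb}"
        show "0 \<le> qt \<kappa> (k+Na) k q"
        proof (cases "m + Na \<le> k")
          case True then show ?thesis using a k by auto
        next
          case False
          then have "k + Na \<in> {m+Na..m+Nb}" using k h by auto
          then show ?thesis using a by fastforce
        qed
      qed
    qed
    then show "epsm \<kappa> Na Nb m q = Pm \<kappa> Na Nb m q" unfolding epsm_char Pm_char by simp
  qed
  have P2: "Nb < 2 * Na - 1 \<longrightarrow> (\<forall>q. epsm \<kappa> Na Nb m q =
             Pm \<kappa> Na Nb m q * (\<Prod>k\<in>{m + Nb - Na + 1..m + Na - 1}. heaviside (qt \<kappa> (k + Na) k q)))"
  proof (intro impI allI)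
    fix q assume h: "Nb < 2 * Na - 1"
    have "(\<forall>k\<in>{m..m+Nb}. 0 \<le> qt \<kappa> (k+Na) k q) \<longleftrightarrow>
          (\<forall>k\<in>{m+Na..m+Nb}. 0 \<le> qt \<kappa> k (k-Na) q \<and> 0 \<le> qt \<kappa> (k+Na) k q)
          \<and> (\<forall>k\<in>{m + Nb - Na + 1..m + Na - 1}. 0 \<le> qt \<kappa> (k+Na) k q)"
    proof
      assume a: "\<forall>k\<in>{m..m+Nb}. 0 \<le> qt \<kappa> (k+Na) k q"
      have "\<forall>k\<in>{m+Na..m+Nb}. 0 \<le> qt \<kappa> k (k-Na) q \<and> 0 \<le> qt \<kappa> (k+Na) k q"
      proof
        fix k assume k: "k \<in> {m+Na..m+Nb}"
        have "k - Na \<in> {m..m+Nb}" "k \<in> {m..m+Nb}" using k Na1 by auto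
        then show "0 \<le> qt \<kappa> k (k-Na) q \<and> 0 \<le> qt \<kappa> (k+Na) k q" using a by fastforce
      qed
      moreover have "\<forall>k\<in>{m + Nb - Na + 1..m + Na - 1}. 0 \<le> qt \<kappa> (k+Na) k q"
        using a NaNb by auto
      ultimately show "(\<forall>k\<in>{m+Na..m+Nb}. 0 \<le> qt \<kappa> k (k-Na) q \<and> 0 \<le> qt \<kappa> (k+Na) k q)
          \<and> (\<forall>k\<in>{m + Nb - Na + 1..m + Na - 1}. 0 \<le> qt \<kappa> (k+Na) k q)" by blast
    next
      assume a: "(\<forall>k\<in>{m+Na..m+Nb}. 0 \<le> qt \<kappa> k (k-Na) q \<and> 0 \<le> qt \<kappa> (k+Na) k q)
          \<and> (\<forall>k\<in>{m + Nb - Na + 1..m + Na - 1}. 0 \<le> qt \<kappa> (k+Na) k q)"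
      show "\<forall>k\<in>{m..m+Nb}. 0 \<le> qt \<kappa> (k+Na) k q"
      proof
        fix k assume k: "k \<in> {m..m+Nb}"
        show "0 \<le> qt \<kappa> (k+Na) k q"
        proof (cases "m + Na \<le> k")
          case True then show ?thesis using a k by auto
        next
          case False
          show ?thesis
          proof (cases "k \<le> m + Nb - Na")
            case True
            then have "k + Na \<in> {m+Na..m+Nb}" using k by auto
            then show ?thesis using a by fastforce
          next
            case F2: False
            then show ?thesis using a k False by auto
          qed
        qed
      qed
    qed
    then show "epsm \<kappa> Na Nb m q = Pm \<kappa> Na Nb m q * (\<Prod>k\<in>{m + Nb - Na + 1..m + Na - 1}. heaviside (qt \<kappa> (k + Na) k q))"
      unfolding epsm_char Pm_char extra_char[OF finite_atLeastAtMost_int] by auto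
  qed
  have P3: "{q. epsm \<kappa> Na Nb m q = 1} \<subseteq> {q. Pm \<kappa> Na Nb m q = 1}"
  proof
    fix q assume "q \<in> {q. epsm \<kappa> Na Nb m q = 1}"
    then have a: "\<forall>k\<in>{m..m+Nb}. 0 \<le> qt \<kappa> (k+Na) k q" unfolding epsm_char by (auto split: if_splits)
    have "\<forall>k\<in>{m+Na..m+Nb}. 0 \<le> qt \<kappa> k (k-Na) q \<and> 0 \<le> qt \<kappa> (k+Na) k q"
    proof
      fix k assume k: "k \<in> {m+Na..m+Nb}"
      have "k - Na \<in> {m..m+Nb}" "k \<in> {m..m+Nb}" using k Na1 by auto
      then show "0 \<le> qt \<kappa> k (k-Na) q \<and> 0 \<le> qt \<kappa> (k+Na) k q" using a by fastforce
    qed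
    then show "q \<in> {q. Pm \<kappa> Na Nb m q = 1}" unfolding Pm_char by simp
  qed
  have P4: "{q. epsm \<kappa> Na Nb m q = 1} \<subseteq> {q. (fst q)\<^sup>2 \<le> snd q}"
  proof
    fix q assume "q \<in> {q. epsm \<kappa> Na Nb m q = 1}"
    then have "epsm \<kappa> Na Nb r q = 1" using epseq by simp
    then have a: "\<forall>k\<in>{r..r+Nb}. 0 \<le> qt \<kappa> (k+Na) k q" unfolding epsm_char by (auto split: if_splits)
    have "(fst q)\<^sup>2 \<le> snd q"
      by (rule part4_r[OF Na1 NaNb mono per r1 r2]) (use a in \<open>auto simp: qt_expand\<close>)
    then show "q \<in> {q. (fst q)\<^sup>2 \<le> snd q}" by simp
  qed
  have P5: "interior {q. epsm \<kappa> Na Nb m q = 1} \<noteq> {}"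
    using part5_r[OF Na1 NaNb mono per r1 r2] epseq by simp
  show ?thesis using P1 P2 P3 P4 P5 by blast
qed

end
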